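(* Let $\mathfrak{g}$ be a $6$-dimensional real nilpotent Lie algebra with a complex structure $J$. Then $\mathfrak{g}^*$ has a basis $\{e^1,\dots,e^6\}$ such that $e^1+ie^2$ is a closed $(1,0)$-form (i.e. $d(e^1+ie^2)=0$ and $e^1+ie^2\in\Lambda^{1,0}$) and $de^3\in\langle e^{12}\rangle$, $de^4\in\langle e^{12},e^{13},e^{23}\rangle$, $de^5\in\langle e^{12},e^{13},e^{14},e^{23},e^{24},e^{34}\rangle$, $de^6\in\langle e^{12},e^{13},e^{14},e^{15},e^{23},e^{24},e^{25},e^{34}\rangle$.
   Context: A complex structure is a linear $J\colon\mathfrak{g}\to\mathfrak{g}$ with $J^2=-1$ and $[JX,JY]=[X,Y]+J[JX,Y]+J[X,JY]$ for all $X,Y$. $d\alpha(X,Y)=-\alpha([X,Y])$, extended complex-linearly; $\Lambda^{1,0}$ is the space of complex-linear forms $\omega$ on $\mathfrak{g}$ with $\omega(JX)=i\,\omega(X)$. $e^{ij}=e^i\wedge e^j$. *)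

theory Defs
  imports "HOL-Analysis.Analysis"
begin

definition lie_algebra :: "('g::real_vector \<Rightarrow> 'g \<Rightarrow> 'g) \<Rightarrow> bool" where
  "lie_algebra br \<longleftrightarrow> bilinear br \<and> (\<forall>x. br x x = 0) \<and>
     (\<forall>x y z. br x (br y z) + br y (br z x) + br z (br x y) = 0)"

fun lower_central :: "('g::real_vector \<Rightarrow> 'g \<Rightarrow> 'g) \<Rightarrow> nat \<Rightarrow> 'g set" where
  "lower_central br 0 = UNIV"
| "lower_central br (Suc k) = span {br x y | x y. y \<in> lower_central br k}"

definition nilpotent_lie :: "('g::real_vector \<Rightarrow> 'g \<Rightarrow> 'g) \<Rightarrow> bool" where
  "nilpotent_lie br \<longleftrightarrow> (\<exists>k. lower_central br k = {0})"

definition complex_structure ::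
  "('g::real_vector \<Rightarrow> 'g \<Rightarrow> 'g) \<Rightarrow> ('g \<Rightarrow> 'g) \<Rightarrow> bool" where
  "complex_structure br J \<longleftrightarrow> linear J \<and> (\<forall>x. J (J x) = - x) \<and>
     (\<forall>X Y. br (J X) (J Y) = br X Y + J (br (J X) Y) + J (br X (J Y)))"

definition dform :: "('g \<Rightarrow> 'g \<Rightarrow> 'g) \<Rightarrow> ('g \<Rightarrow> 'a::ab_group_add) \<Rightarrow> 'g \<Rightarrow> 'g \<Rightarrow> 'a" where
  "dform br \<alpha> X Y = - \<alpha> (br X Y)"

definition wedge :: "('g \<Rightarrow> real) \<Rightarrow> ('g \<Rightarrow> real) \<Rightarrow> 'g \<Rightarrow> 'g \<Rightarrow> real" where
  "wedge a b X Y = a X * b Y - b X * a Y"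

definition in_span2 :: "(nat \<Rightarrow> 'g \<Rightarrow> real) \<Rightarrow> (nat \<times> nat) set \<Rightarrow> ('g \<Rightarrow> 'g \<Rightarrow> real) \<Rightarrow> bool" where
  "in_span2 e S \<phi> \<longleftrightarrow> (\<exists>c :: nat \<times> nat \<Rightarrow> real.
     \<forall>X Y. \<phi> X Y = (\<Sum>(i,j)\<in>S. c (i,j) * wedge (e i) (e j) X Y))"

definition dual_basis6 :: "(nat \<Rightarrow> 'g::real_vector \<Rightarrow> real) \<Rightarrow> bool" where
  "dual_basis6 e \<longleftrightarrow> (\<forall>i\<in>{1..6}. linear (e i)) \<and>
     (\<forall>c :: nat \<Rightarrow> real. (\<forall>X. (\<Sum>i=1..6. c i * e i X) = 0) \<longrightarrow> (\<forall>i\<in>{1..6}. c i = 0))"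

definition is_form_10 :: "('g \<Rightarrow> 'g) \<Rightarrow> ('g \<Rightarrow> complex) \<Rightarrow> bool" where
  "is_form_10 J \<omega> \<longleftrightarrow> (\<forall>X. \<omega> (J X) = \<i> * \<omega> X)"

end

theory Submission imports Defs begin

locale lcx =
  fixes br :: "'g::euclidean_space \<Rightarrow> 'g \<Rightarrow> 'g" and J :: "'g \<Rightarrow> 'g"
  assumes lie: "lie_algebra br" and nil: "nilpotent_lie br" and cs: "complex_structure br J"
    and dim6: "DIM('g) = 6"
begin

definition Jinv :: "'g set \<Rightarrow> bool" where "Jinv W \<longleftrightarrow> (\<forall>x\<in>W. J x \<in> W)"

lemma bil: "bilinear br" using lie unfolding lie_algebra_def by auto
lemma alt: "br x x = 0" using lie unfolding lie_algebra_def by auto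
lemma jac: "br x (br y z) + br y (br z x) + br z (br x y) = 0" using lie unfolding lie_algebra_def by auto
lemma linJ: "linear J" using cs unfolding complex_structure_def by auto
lemma JJ[simp]: "J (J x) = - x" using cs unfolding complex_structure_def by auto
lemma integ: "br (J X) (J Y) = br X Y + J (br (J X) Y) + J (br X (J Y))"
  using cs unfolding complex_structure_def by auto

lemma br_add1: "br (x + y) z = br x z + br y z" by (rule bilinear_ladd[OF bil])
lemma br_add2: "br z (x + y) = br z x + br z y" by (rule bilinear_radd[OF bil])
lemma br_scale1: "br (c *\<^sub>R x) z = c *\<^sub>R br x z" by (rule bilinear_lmul[OF bil])
lemma br_scale2: "br z (c *\<^sub>R x) = c *\<^sub>R br z x" by (rule bilinear_rmul[OF bil])
lemma br_neg1: "br (- x) z = - br x z" by (rule bilinear_lneg[OF bil])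
lemma br_neg2: "br z (- x) = - br z x" by (rule bilinear_rneg[OF bil])
lemma br_zero1[simp]: "br 0 z = 0" by (rule bilinear_lzero[OF bil])
lemma br_zero2[simp]: "br z 0 = 0" by (rule bilinear_rzero[OF bil])
lemma br_diff2: "br z (x - y) = br z x - br z y" by (rule bilinear_rsub[OF bil])

lemma anti: "br y x = - br x y"
proof -
  have "br x x + br y x + (br x y + br y y) = 0" using alt[of "x+y"] by (simp only: br_add1 br_add2)
  then have "br y x + br x y = 0" by (simp add: alt)
  then show ?thesis by (metis eq_neg_iff_add_eq_0)
qed

lemma J_add: "J (x + y) = J x + J y" using linJ by (simp add: linear_add)
lemma J_scale: "J (c *\<^sub>R x) = c *\<^sub>R J x" using linJ by (simp add: linear_scale)
lemma J_neg: "J (- x) = - J x" using linJ by (simp add: linear_neg)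
lemma J_zero[simp]: "J 0 = 0" using linJ by (simp add: linear_0)

lemma LC_sub: "subspace (lower_central br k)"
  by (cases k) (auto simp: subspace_UNIV)

lemma LC_br2: "y \<in> lower_central br k \<Longrightarrow> br x y \<in> lower_central br (Suc k)"
  by (auto intro: span_base)
lemma LC_br1: "x \<in> lower_central br k \<Longrightarrow> br x y \<in> lower_central br (Suc k)"
  using LC_br2[of x k y] anti[of x y] LC_sub[of "Suc k"]
  by (metis subspace_neg anti minus_minus)

lemma nilK: "\<exists>K. lower_central br K = {0}" using nil unfolding nilpotent_lie_def by auto

lemma step_exists:
  fixes P :: "nat \<Rightarrow> bool"
  assumes "P 0" "\<not> P K" shows "\<exists>k. P k \<and> \<not> P (Suc k)"
  using assms by (induction K) auto

lemma engel:
  assumes inv: "\<And>s m. s \<in> S \<Longrightarrow> m \<in> M \<Longrightarrow> br s m \<in> M"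
    and N: "subspace N" and MN: "\<not> M \<subseteq> N"
  shows "\<exists>v\<in>M. v \<notin> N \<and> (\<forall>s\<in>S. br s v \<in> N)"
proof -
  obtain K where K: "lower_central br K = {0}" using nilK by auto
  let ?P = "\<lambda>k. \<exists>v\<in>M \<inter> lower_central br k. v \<notin> N"
  have "?P 0" using MN by auto
  moreover have "\<not> ?P K" using K N by (auto simp: subspace_0)
  ultimately obtain k where k: "?P k" "\<not> ?P (Suc k)" using step_exists[of ?P K] by blast
  then obtain v where v: "v \<in> M" "v \<in> lower_central br k" "v \<notin> N" by auto
  have "br s v \<in> N" if "s \<in> S" for s
    using k(2) inv[OF that v(1)] LC_br2[OF v(2), of s] by auto
  with v show ?thesis by auto
qed

definition JS :: "'g set \<Rightarrow> 'g set" where "JS S = span (S \<union> J ` S)"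

lemma JS_sub: "subspace (JS S)" unfolding JS_def by simp

lemma JS_repr:
  assumes "subspace S" "x \<in> JS S" shows "\<exists>a\<in>S. \<exists>b\<in>S. x = a + J b"
proof -
  have "x \<in> {x + y |x y. x \<in> span S \<and> y \<in> span (J ` S)}"
    using assms(2) unfolding JS_def span_Un by simp
  then obtain a y where a: "a \<in> span S" "y \<in> span (J ` S)" "x = a + y" by blast
  have sS: "span S = S" using assms(1) by (simp add: span_eq_iff)
  have "span (J ` S) = J ` S" using span_linear_image[OF linJ, of S] sS by simp
  with a sS show ?thesis by auto
qed

lemma JS_base1: "x \<in> S \<Longrightarrow> x \<in> JS S" unfolding JS_def by (auto intro: span_base)
lemma JS_base2: "x \<in> S \<Longrightarrow> J x \<in> JS S" unfolding JS_def by (auto intro: span_base)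

lemma JS_Jinv: assumes "subspace S" shows "Jinv (JS S)"
  unfolding Jinv_def
proof
  fix x assume "x \<in> JS S"
  then obtain a b where ab: "a \<in> S" "b \<in> S" "x = a + J b" using JS_repr[OF assms] by blast
  have "J x = J a + (- b)" using ab by (simp add: J_add)
  moreover have "- b \<in> JS S" using ab(2) assms JS_base1 subspace_neg by blast
  ultimately show "J x \<in> JS S" using JS_base2[OF ab(1)] JS_sub subspace_add by metis
qed

lemma JS_mono: "S \<subseteq> T \<Longrightarrow> JS S \<subseteq> JS T" unfolding JS_def by (intro span_mono) auto

lemma JS_minimal: assumes "subspace W" "Jinv W" "S \<subseteq> W" shows "JS S \<subseteq> W"
  unfolding JS_def using assms by (intro span_minimal) (auto simp: Jinv_def)

lemma keyA:
  assumes U: "subspace U" "Jinv U" and S: "subspace S" "S \<subseteq> U" "U \<subseteq> JS S"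
    and x: "x \<in> U" and y: "y \<in> U"
  shows "br x y \<in> JS (span {br s u | s u. s \<in> S \<and> u \<in> U})"
proof -
  define R where "R = span {br s u | s u. s \<in> S \<and> u \<in> U}"
  have inR: "br s u \<in> R" if "s \<in> S" "u \<in> U" for s u
    unfolding R_def using that by (auto intro: span_base)
  have inR': "br u s \<in> R" if "s \<in> S" "u \<in> U" for s u
  proof -
    have "- br s u \<in> R" using inR[OF that] unfolding R_def by (simp add: span_neg)
    then show ?thesis by (metis anti)
  qed
  obtain a b where ab: "a \<in> S" "b \<in> S" "x = a + J b" using JS_repr[OF S(1)] x S(3) by blast
  obtain c d where cd: "c \<in> S" "d \<in> S" "y = c + J d" using JS_repr[OF S(1)] y S(3) by blast
  have Jb: "J b \<in> U" "J d \<in> U" using ab cd S(2) U(2) unfolding Jinv_def by auto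
  have e: "br x y = br a y + br (J b) c + (br b d + J (br (J b) d) + J (br b (J d)))"
    using ab cd by (simp add: br_add1 br_add2 integ add.assoc)
  have sub: "subspace (JS R)" by (rule JS_sub)
  have t1: "br a y \<in> JS R" using inR[OF ab(1) y] JS_base1 by blast
  have t2: "br (J b) c \<in> JS R" using inR'[OF cd(1) Jb(1)] JS_base1 by blast
  have t3: "br b d \<in> JS R" using inR[OF ab(2)] cd(2) S(2) JS_base1 by blast
  have t4: "J (br (J b) d) \<in> JS R" using inR'[OF cd(2) Jb(1)] JS_base2 by blast
  have t5: "J (br b (J d)) \<in> JS R" using inR[OF ab(2) Jb(2)] JS_base2 by blast
  show ?thesis unfolding e R_def[symmetric]
    using t1 t2 t3 t4 t5 sub by (metis subspace_add)
qed

primrec Sq :: "'g set \<Rightarrow> nat \<Rightarrow> 'g set" where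
  "Sq U 0 = U"
| "Sq U (Suc k) = span {br s u | s u. s \<in> Sq U k \<and> u \<in> U}"

lemma Sq_LC: "Sq U k \<subseteq> lower_central br k"
proof (induction k)
  case 0 then show ?case by simp
next
  case (Suc k)
  show ?case unfolding Sq.simps
    by (rule span_minimal) (use Suc LC_br1 LC_sub in auto)
qed

lemma Sq_U: assumes "subspace U" "\<forall>x\<in>U. \<forall>y\<in>U. br x y \<in> U" shows "Sq U k \<subseteq> U \<and> subspace (Sq U k)"
proof (induction k)
  case 0 then show ?case using assms by simp
next
  case (Suc k)
  have "Sq U (Suc k) \<subseteq> U" unfolding Sq.simps
    by (rule span_minimal) (use Suc assms in auto)
  then show ?case by simp
qed

lemma stepA:
  assumes U: "subspace U" "Jinv U" "\<forall>x\<in>U. \<forall>y\<in>U. br x y \<in> U" "U \<noteq> {0}"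
  shows "\<exists>Q. subspace Q \<and> Jinv Q \<and> Q \<subseteq> U \<and> \<not> U \<subseteq> Q \<and> (\<forall>x\<in>U. \<forall>y\<in>U. br x y \<in> Q)"
proof -
  define Q where "Q = JS (Sq U 1)"
  have SqU: "Sq U k \<subseteq> U" "subspace (Sq U k)" for k using Sq_U[OF U(1,3)] by auto
  have brQ: "br x y \<in> Q" if "x \<in> U" "y \<in> U" for x y
    unfolding Q_def using that by (auto intro!: JS_base1 span_base)
  have QU: "Q \<subseteq> U" unfolding Q_def by (rule JS_minimal[OF U(1,2) SqU(1)])
  have notU: "\<not> U \<subseteq> Q"
  proof
    assume H: "U \<subseteq> Q"
    have all: "U \<subseteq> JS (Sq U k)" for k
    proof (induction k)
      case 0 then show ?case unfolding JS_def by (auto intro: span_base)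
    next
      case (Suc k)
      have br: "br x y \<in> JS (Sq U (Suc k))" if "x \<in> U" "y \<in> U" for x y
        using keyA[OF U(1,2) SqU(2)[of k] SqU(1)[of k] Suc that] by simp
      have "Sq U 1 \<subseteq> JS (Sq U (Suc k))"
        unfolding One_nat_def Sq.simps by (rule span_minimal) (use br JS_sub in auto)
      then have "Q \<subseteq> JS (Sq U (Suc k))" unfolding Q_def
        by (intro JS_minimal JS_sub JS_Jinv SqU)
      with H show ?case by auto
    qed
    obtain K where K: "lower_central br K = {0}" using nilK by auto
    have "Sq U K \<subseteq> {0}" using Sq_LC[of U K] K by auto
    then have "JS (Sq U K) \<subseteq> {0}" by (intro JS_minimal) (auto simp: Jinv_def)
    with all[of K] U(4) U(1) show False by (auto simp: subspace_0)
  qed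
  have "subspace Q" "Jinv Q" unfolding Q_def by (rule JS_sub, rule JS_Jinv[OF SqU(2)])
  with QU notU brQ show ?thesis by blast
qed

lemma span_ins_span: "span (insert a (span S)) = span (insert a S)"
proof
  show "span (insert a (span S)) \<subseteq> span (insert a S)"
    by (rule span_minimal) (auto intro: span_base span_mono[THEN subsetD, rotated])
  show "span (insert a S) \<subseteq> span (insert a (span S))"
    by (rule span_mono) (auto intro: span_base)
qed

lemma span_ins2_span: "span (insert a (insert b (span S))) = span (insert a (insert b S))"
  by (metis span_ins_span insert_commute)

lemma notin_J:
  assumes W: "subspace W" "Jinv W" and s: "s \<notin> W"
  shows "J s \<notin> span (insert s W)"
proof
  assume "J s \<in> span (insert s W)"
  moreover have sW: "span W = W" using W(1) by (simp add: span_eq_iff)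
  ultimately obtain k where k: "J s - k *\<^sub>R s \<in> W" using span_breakdown_eq[of "J s" s W] by auto
  then have "J (J s - k *\<^sub>R s) \<in> W" using W(2) unfolding Jinv_def by blast
  then have a: "- s - k *\<^sub>R J s \<in> W" using linJ by (simp add: linear_diff J_scale)
  have "(- s - k *\<^sub>R J s) + k *\<^sub>R (J s - k *\<^sub>R s) \<in> W" using a k W(1) by (simp add: subspace_add subspace_scale)
  moreover have "(- s - k *\<^sub>R J s) + k *\<^sub>R (J s - k *\<^sub>R s) = - (1 + k * k) *\<^sub>R s"
    by (simp add: algebra_simps)
  ultimately have cs: "(- (1 + k * k)) *\<^sub>R s \<in> W" by simp
  have "k * k \<ge> 0" by simp
  then have c0: "- (1 + k * k) \<noteq> 0" by linarith
  have "inverse (- (1 + k * k)) *\<^sub>R ((- (1 + k * k)) *\<^sub>R s) \<in> W" by (rule subspace_scale[OF W(1) cs])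
  then have "s \<in> W" using c0 by (simp del: scaleR_minus_left minus_add_distrib)
  with s show False by simp
qed

lemma ext:
  assumes W: "subspace W" "Jinv W" and s: "s \<notin> W"
  defines "W' \<equiv> span (insert (J s) (insert s W))"
  shows "subspace W' \<and> Jinv W' \<and> W \<subseteq> W' \<and> s \<in> W' \<and> J s \<in> W' \<and> dim W' = dim W + 2"
proof -
  have sW: "span W = W" using W(1) by (simp add: span_eq_iff)
  have d: "dim W' = dim W + 2" unfolding W'_def dim_span
    using notin_J[OF W s] s by (simp add: dim_insert sW del: dim_span span_eq_iff)
  have "Jinv W'" unfolding Jinv_def
  proof
    fix x assume "x \<in> W'"
    then have "J x \<in> J ` W'" by simp
    also have "J ` W' = span (J ` (insert (J s) (insert s W)))" unfolding W'_def by (rule span_linear_image[OF linJ, symmetric])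
    also have "\<dots> \<subseteq> W'" unfolding W'_def
    proof (rule span_minimal)
      show "J ` insert (J s) (insert s W) \<subseteq> span (insert (J s) (insert s W))"
      proof
        fix y assume "y \<in> J ` insert (J s) (insert s W)"
        then consider "y = - s" | "y = J s" | "y \<in> J ` W" by auto
        then show "y \<in> span (insert (J s) (insert s W))"
        proof cases
          case 1 then show ?thesis by (simp add: span_base span_neg)
        next
          case 2 then show ?thesis by (simp add: span_base)
        next
          case 3 then have "y \<in> W" using W(2) unfolding Jinv_def by auto
          then show ?thesis by (simp add: span_base)
        qed
      qed
    qed simp
    finally show "J x \<in> W'" .
  qed
  then show ?thesis using d unfolding W'_def by (auto intro: span_base)
qed

lemma even_dim: assumes W: "subspace W" "Jinv W" shows "even (dim W)"
proof -
  have ex: "\<exists>V. subspace V \<and> Jinv V \<and> V \<subseteq> W \<and> dim V = 2 * m" if "2 * m \<le> dim W" for m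
    using that
  proof (induction m)
    case 0
    have "subspace {0::'g}" "Jinv {0}" "{0} \<subseteq> W" "dim {0::'g} = 2 * 0"
      using W by (auto simp: Jinv_def subspace_0)
    then show ?case by blast
  next
    case (Suc m)
    then obtain V where V: "subspace V" "Jinv V" "V \<subseteq> W" "dim V = 2 * m" by auto
    have "\<not> W \<subseteq> V" using V Suc.prems dim_subset[of W V] by auto
    then obtain s where s: "s \<in> W" "s \<notin> V" by auto
    note E = ext[OF V(1,2) s(2)]
    have "span (insert (J s) (insert s V)) \<subseteq> W"
      using s V W by (intro span_minimal) (auto simp: Jinv_def)
    then show ?case using E V by (intro exI[of _ "span (insert (J s) (insert s V))"]) auto
  qed
  show ?thesis
  proof (rule ccontr)
    assume "odd (dim W)"
    then obtain m where m: "dim W = 2 * m + 1" by (metis oddE)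
    obtain V where V: "subspace V" "Jinv V" "V \<subseteq> W" "dim V = 2 * m" using ex[of m] m by auto
    have "\<not> W \<subseteq> V" using V m dim_subset[of W V] by auto
    then obtain s where s: "s \<in> W" "s \<notin> V" by auto
    note E = ext[OF V(1,2) s(2)]
    have "span (insert (J s) (insert s V)) \<subseteq> W"
      using s V W by (intro span_minimal) (auto simp: Jinv_def)
    from dim_subset[OF this] E V m show False by simp
  qed
qed

lemma dim_pair: assumes "t \<noteq> 0" shows "dim {J t, t} = 2"
proof -
  have "subspace {0::'g}" "Jinv {0}" by (auto simp: Jinv_def subspace_0)
  from ext[OF this, of t] assms have "dim (span (insert (J t) (insert t {0}))) = 2" by simp
  moreover have "insert (J t) (insert t {0}) = insert 0 {J t, t}" by auto
  ultimately show ?thesis by (metis dim_span span_insert_0)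
qed

lemma Jt_not_span: assumes "t \<noteq> 0" shows "J t \<notin> span {t}"
proof -
  have "subspace {0::'g}" "Jinv {0}" by (auto simp: Jinv_def subspace_0)
  from notin_J[OF this, of t] assms have "J t \<notin> span (insert t {0})" by simp
  moreover have "insert t {0} = insert 0 {t}" by auto
  ultimately show ?thesis by (metis span_insert_0)
qed

lemma not_sub_UNIV: fixes W :: "'g set" assumes "dim W < 6" shows "\<exists>s. s \<notin> W"
proof (rule ccontr)
  assume "\<not> ?thesis" then have "W = UNIV" by auto
  with assms dim6 show False by simp
qed

lemma go_up:
  assumes W: "subspace W" "Jinv W"
  shows "dim W + 2 * n \<le> 4 \<Longrightarrow> \<exists>V. W \<subseteq> V \<and> subspace V \<and> Jinv V \<and> dim V = dim W + 2 * n"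
proof (induction n)
  case 0 then show ?case using W by auto
next
  case (Suc n)
  then obtain V where V: "W \<subseteq> V" "subspace V" "Jinv V" "dim V = dim W + 2 * n" by auto
  obtain s where s: "s \<notin> V" using not_sub_UNIV[of V] V Suc.prems by auto
  note E = ext[OF V(2,3) s]
  show ?case using E V by (intro exI[of _ "span (insert (J s) (insert s V))"]) auto
qed

lemma exU: "\<exists>U. subspace U \<and> Jinv U \<and> dim U = 4 \<and> (\<forall>x y. br x y \<in> U)"
proof -
  have "(UNIV::'g set) \<noteq> {0}"
  proof
    assume a: "(UNIV::'g set) = {0}"
    have "dim (UNIV::'g set) = 0" by (subst a) simp
    with dim6 show False by simp
  qed
  then obtain Q where Q: "subspace Q" "Jinv Q" "\<not> UNIV \<subseteq> Q" "\<forall>x y. br x y \<in> Q"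
    using stepA[of UNIV] by (auto simp: Jinv_def)
  have "dim Q < 6"
  proof (rule ccontr)
    assume "\<not> dim Q < 6"
    then have "Q = UNIV" using subspace_dim_equal[OF Q(1) subspace_UNIV] dim6 by simp
    with Q(3) show False by simp
  qed
  moreover have "even (dim Q)" by (rule even_dim[OF Q(1,2)])
  ultimately have "dim Q \<le> 4" by presburger
  then obtain n where n: "dim Q + 2 * n = 4" using \<open>even (dim Q)\<close>
    by (metis add_diff_cancel_left' dvd_def even_add even_diff_nat le_add_diff_inverse odd_numeral even_numeral)
  then obtain V where "Q \<subseteq> V" "subspace V" "Jinv V" "dim V = 4" using go_up[OF Q(1,2), of n] by auto
  with Q(4) show ?thesis by blast
qed

lemma span2_repr: assumes "v \<in> span {p, q}" shows "\<exists>a b. v = a *\<^sub>R p + b *\<^sub>R q"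
proof -
  obtain a where "v - a *\<^sub>R p \<in> span {q}" using assms span_breakdown_eq[of v p "{q}"] by auto
  then obtain b where "v - a *\<^sub>R p = b *\<^sub>R q" by (auto simp: span_singleton)
  then have "v = a *\<^sub>R p + b *\<^sub>R q" by (simp add: algebra_simps)
  then show ?thesis by blast
qed

lemma bil_lin1: "linear (\<lambda>x. br x y)" using bil unfolding bilinear_def by auto
lemma bil_lin2: "linear (\<lambda>y. br x y)" using bil unfolding bilinear_def by auto

lemma center2:
  assumes U: "subspace U" "Jinv U" "dim U = 4" "\<forall>x y. br x y \<in> U"
  shows "\<exists>t0. t0 \<noteq> 0 \<and> t0 \<in> U \<and> J t0 \<in> U \<and> (\<forall>u\<in>U. br u t0 = 0 \<and> br u (J t0) = 0)"
proof -
  have U0: "U \<noteq> {0}" using U(3) by auto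
  obtain Q where Q: "subspace Q" "Jinv Q" "Q \<subseteq> U" "\<not> U \<subseteq> Q" "\<forall>x\<in>U. \<forall>y\<in>U. br x y \<in> Q"
    using stepA[OF U(1,2) _ U0] U(4) by blast
  show ?thesis
  proof (cases "Q = {0}")
    case True
    then obtain t where t: "t \<in> U" "t \<noteq> 0" using Q(4) by auto
    have "J t \<in> U" using t U(2) unfolding Jinv_def by auto
    with t Q(5) True show ?thesis by blast
  next
    case False
    obtain t0 where t0: "t0 \<in> Q" "t0 \<noteq> 0" "\<forall>s\<in>U. br s t0 = 0"
      using engel[of U Q "{0}"] Q False subspace_0 by (auto simp: subspace_def)
    have t0U: "t0 \<in> U" "J t0 \<in> U" "J t0 \<in> Q" using t0 Q U(2) unfolding Jinv_def by auto
    have "dim Q < 4"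
    proof (rule ccontr)
      assume "\<not> dim Q < 4"
      then have "Q = U" using subspace_dim_equal[OF Q(1) U(1) Q(3)] U(3) by simp
      with Q(4) show False by simp
    qed
    moreover have "dim Q \<noteq> 0" using False Q(1) subspace_0 by auto
    moreover have "even (dim Q)" by (rule even_dim[OF Q(1,2)])
    ultimately have dQ: "dim Q = 2" by presburger
    have "span {J t0, t0} \<subseteq> Q" using t0 t0U Q(1) by (intro span_minimal) auto
    then have hQ: "span {J t0, t0} = Q"
      using subspace_dim_equal[of "span {J t0, t0}" Q] dQ dim_pair[OF t0(2)] Q(1) by simp
    obtain X where X: "X \<in> U" "X \<notin> Q" using Q(4) by auto
    have JX: "J X \<in> U" using X U(2) unfolding Jinv_def by auto
    note E = ext[OF Q(1,2) X(2)]
    have "span (insert (J X) (insert X Q)) \<subseteq> U" using X JX Q(3) U(1) by (intro span_minimal) auto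
    then have hU: "span (insert (J X) (insert X Q)) = U"
      using subspace_dim_equal[of "span (insert (J X) (insert X Q))" U] E dQ U(1,3) by simp
    define \<phi> where "\<phi> = (\<lambda>v. br v (J t0))"
    have lin: "linear \<phi>" unfolding \<phi>_def by (rule bil_lin1)
    have phiJ: "\<phi> (J v) = J (\<phi> v)" if "v \<in> U" for v
    proof -
      have "J v \<in> U" using that U(2) unfolding Jinv_def by auto
      then show ?thesis unfolding \<phi>_def using integ[of v t0] t0(3) that by simp
    qed
    have nQ: "\<not> Q \<subseteq> span {t0}" using t0U(3) Jt_not_span[OF t0(2)] by auto
    have wQ: "\<phi> X \<in> Q" unfolding \<phi>_def using Q(5) X(1) t0U(2) by auto
    have keyc: "w \<in> span {t0}" if Y: "Y \<in> U" and w: "w = \<phi> Y" for Y w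
    proof -
      obtain v where v: "v \<in> Q" "v \<notin> span {t0}" "br Y v \<in> span {t0}"
        using engel[of "{Y}" Q "span {t0}"] Q(3,5) Y nQ by auto
      obtain b a where ba: "v = b *\<^sub>R J t0 + a *\<^sub>R t0" using span2_repr[of v "J t0" t0] v(1) hQ by auto
      have b0: "b \<noteq> 0"
      proof
        assume "b = 0" then have "v \<in> span {t0}" using ba by (simp add: span_base span_scale)
        with v(2) show False by simp
      qed
      have "br Y v = b *\<^sub>R w" using ba t0(3) Y w unfolding \<phi>_def by (simp add: br_add2 br_scale2)
      with v(3) have "b *\<^sub>R w \<in> span {t0}" by simp
      then have "inverse b *\<^sub>R (b *\<^sub>R w) \<in> span {t0}" by (rule span_scale)
      with b0 show ?thesis by simp
    qed
    obtain \<alpha> where al: "\<phi> X = \<alpha> *\<^sub>R t0" using keyc[OF X(1) refl] by (auto simp: span_singleton)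
    have "\<phi> (J X) = \<alpha> *\<^sub>R J t0" using phiJ[OF X(1)] al by (simp add: J_scale)
    moreover have "\<phi> (J X) \<in> span {t0}" using keyc[OF JX refl] .
    ultimately have "\<alpha> = 0"
    proof -
      assume a1: "\<phi> (J X) = \<alpha> *\<^sub>R J t0" and a2: "\<phi> (J X) \<in> span {t0}"
      show "\<alpha> = 0"
      proof (rule ccontr)
        assume "\<alpha> \<noteq> 0"
        have "inverse \<alpha> *\<^sub>R \<phi> (J X) \<in> span {t0}" using a2 by (rule span_scale)
        with a1 \<open>\<alpha> \<noteq> 0\<close> have "J t0 \<in> span {t0}" by simp
        with Jt_not_span[OF t0(2)] show False by simp
      qed
    qed
    then have phX: "\<phi> X = 0" "\<phi> (J X) = 0" using al phiJ[OF X(1)] by auto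
    have phQ: "\<phi> q = 0" if "q \<in> Q" for q
    proof -
      have "\<phi> q = (\<lambda>_. 0) q"
      proof (rule linear_eq_on_span[OF lin])
        show "linear (\<lambda>_. 0::'g)" by (simp add: linear_zero)
        show "q \<in> span {J t0, t0}" using that hQ by simp
        fix x assume "x \<in> {J t0, t0}"
        then show "\<phi> x = 0" unfolding \<phi>_def using t0(3) t0U anti[of t0 "J t0"] alt by auto
      qed
      then show ?thesis by simp
    qed
    have phU: "\<phi> u = 0" if "u \<in> U" for u
    proof -
      have "\<phi> u = (\<lambda>_. 0) u"
      proof (rule linear_eq_on_span[OF lin])
        show "linear (\<lambda>_. 0::'g)" by (simp add: linear_zero)
        show "u \<in> span (insert (J X) (insert X Q))" using that hU by simp
        fix x assume "x \<in> insert (J X) (insert X Q)"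
        then show "\<phi> x = 0" using phX phQ by auto
      qed
      then show ?thesis by simp
    qed
    show ?thesis using t0 t0U phU unfolding \<phi>_def by blast
  qed
qed

lemma flag: "\<exists>X :: nat \<Rightarrow> 'g.
  X 2 = J (X 1) \<and>
  span {X 1, X 2, X 3, X 4, X 5, X 6} = UNIV \<and>
  (\<forall>x y. br x y \<in> span {X 3, X 4, X 5, X 6}) \<and>
  (\<forall>x \<in> span {X 3, X 4, X 5, X 6}. J x \<in> span {X 3, X 4, X 5, X 6}) \<and>
  (\<forall>x. br x (X 3) \<in> span {X 4, X 5, X 6}) \<and> (\<forall>x. br x (X 4) \<in> span {X 5, X 6}) \<and>
  (\<forall>x. br x (X 5) \<in> span {X 6}) \<and> (\<forall>x. br x (X 6) = 0) \<and>
  br (X 3) (X 5) = 0 \<and> br (X 4) (X 5) = 0"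
proof -
  obtain U where U: "subspace U" "Jinv U" "dim U = 4" "\<forall>x y. br x y \<in> U" using exU by blast
  obtain t0 where t0: "t0 \<noteq> 0" "t0 \<in> U" "J t0 \<in> U" "\<forall>u\<in>U. br u t0 = 0 \<and> br u (J t0) = 0"
    using center2[OF U] by blast
  define Z where "Z = {v \<in> U. \<forall>u\<in>U. br u v = 0}"
  have ZU: "Z \<subseteq> U" unfolding Z_def by auto
  have invZ: "br x v \<in> Z" if "v \<in> Z" for x v
  proof -
    have "br u (br x v) = 0" if u: "u \<in> U" for u
    proof -
      have "br v u = 0" using \<open>v \<in> Z\<close> u anti[of u v] unfolding Z_def by auto
      moreover have "br v (br u x) = 0" using \<open>v \<in> Z\<close> U(4) anti[of "br u x" v] unfolding Z_def by auto
      ultimately show ?thesis using jac[of u x v] by simp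
    qed
    then show ?thesis unfolding Z_def using U(4) by auto
  qed
  have t0Z: "t0 \<in> Z" "J t0 \<in> Z" using t0 unfolding Z_def by auto
  have sub0: "subspace {0::'g}" by (simp add: subspace_0)
  obtain x6 where x6: "x6 \<in> Z" "x6 \<noteq> 0" "\<forall>s. br s x6 = 0"
    using engel[of UNIV Z "{0}"] invZ sub0 t0Z t0(1) by auto
  have "\<not> Z \<subseteq> span {x6}"
  proof
    assume "Z \<subseteq> span {x6}"
    then have "span {J t0, t0} \<subseteq> span {x6}" using t0Z by (intro span_minimal) auto
    then have "dim {J t0, t0} \<le> card {x6}" using dim_le_card[of "span {J t0, t0}" "{x6}"] by simp
    with dim_pair[OF t0(1)] show False by simp
  qed
  then obtain x5 where x5: "x5 \<in> Z" "x5 \<notin> span {x6}" "\<forall>s. br s x5 \<in> span {x6}"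
    using engel[of UNIV Z "span {x6}"] invZ by auto
  have invU: "br s m \<in> U" for s m using U(4) by auto
  have "\<not> U \<subseteq> span {x5, x6}"
  proof
    assume "U \<subseteq> span {x5, x6}"
    then have "dim U \<le> card {x5, x6}" using dim_le_card[of U "{x5, x6}"] by simp
    moreover have "card {x5, x6} \<le> 2" by (simp add: card_insert_le_m1)
    ultimately show False using U(3) by simp
  qed
  then obtain x4 where x4: "x4 \<in> U" "x4 \<notin> span {x5, x6}" "\<forall>s. br s x4 \<in> span {x5, x6}"
    using engel[of UNIV U "span {x5, x6}"] invU by auto
  have "\<not> U \<subseteq> span {x4, x5, x6}"
  proof
    assume "U \<subseteq> span {x4, x5, x6}"
    then have "dim U \<le> card {x4, x5, x6}" using dim_le_card[of U "{x4, x5, x6}"] by simp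
    moreover have "card {x4, x5, x6} \<le> 3" by (simp add: card_insert_le_m1)
    ultimately show False using U(3) by simp
  qed
  then obtain x3 where x3: "x3 \<in> U" "x3 \<notin> span {x4, x5, x6}" "\<forall>s. br s x3 \<in> span {x4, x5, x6}"
    using engel[of UNIV U "span {x4, x5, x6}"] invU by auto
  have dimB: "dim {x3, x4, x5, x6} = 4" using x3(2) x4(2) x5(2) x6(2) by (simp add: dim_insert)
  have "span {x3, x4, x5, x6} \<subseteq> U" using x3 x4 x5 x6 ZU U(1) by (intro span_minimal) auto
  then have spU: "span {x3, x4, x5, x6} = U"
    using subspace_dim_equal[of "span {x3, x4, x5, x6}" U] dimB U(1,3) by simp
  obtain x1 where x1: "x1 \<notin> U" using not_sub_UNIV[of U] U(3) by auto
  note E = ext[OF U(1,2) x1]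
  have "span (insert (J x1) (insert x1 U)) = UNIV"
    using subspace_dim_equal[of "span (insert (J x1) (insert x1 U))" UNIV] E U(3) dim6 by simp
  then have spAll: "span {x1, J x1, x3, x4, x5, x6} = UNIV"
    unfolding spU[symmetric] span_ins2_span by (simp add: insert_commute)
  define X where "X = (\<lambda>n::nat. if n = 1 then x1 else if n = 2 then J x1 else if n = 3 then x3
     else if n = 4 then x4 else if n = 5 then x5 else x6)"
  have X: "X 1 = x1" "X 2 = J x1" "X 3 = x3" "X 4 = x4" "X 5 = x5" "X 6 = x6" "X (Suc 0) = x1" unfolding X_def by simp_all
  have z5: "br x3 x5 = 0" "br x4 x5 = 0" using x5(1) x3(1) x4(1) unfolding Z_def by auto
  have Jsp: "\<forall>x \<in> span {x3, x4, x5, x6}. J x \<in> span {x3, x4, x5, x6}" using U(2) spU unfolding Jinv_def by simp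
  show ?thesis
    by (rule exI[of _ X]) (use spAll U(4) spU Jsp x3 x4 x5 x6 z5 in \<open>simp add: X\<close>)
qed

lemma lin_vanish: assumes "linear f" "\<forall>x\<in>S. f x = 0" "v \<in> span S" shows "f v = (0::real)"
proof -
  have "f v = (\<lambda>_. 0) v"
    by (rule linear_eq_on_span[OF assms(1) _ _ assms(3)]) (use assms(2) in \<open>auto simp: linear_zero\<close>)
  then show ?thesis by simp
qed

lemma in_span2_crit:
  fixes e :: "nat \<Rightarrow> 'g \<Rightarrow> real" and X :: "nat \<Rightarrow> 'g" and f :: "'g \<Rightarrow> real"
  assumes lin: "\<And>k. linear (e k)" and linf: "linear f"
    and eX: "\<And>k j. k \<in> {1..6} \<Longrightarrow> j \<in> {1..6} \<Longrightarrow> e k (X j) = (if j = k then 1 else 0)"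
    and sp: "span (X ` {1..6}) = UNIV"
    and S: "S \<subseteq> {(i,j). 1 \<le> i \<and> i < j \<and> j \<le> 6}" "finite S"
    and van: "\<And>a b. 1 \<le> a \<Longrightarrow> a < b \<Longrightarrow> b \<le> 6 \<Longrightarrow> (a,b) \<notin> S \<Longrightarrow> f (br (X a) (X b)) = 0"
  shows "in_span2 e S (dform br f)"
proof -
  define c where "c = (\<lambda>(i::nat,j::nat). - f (br (X i) (X j)))"
  define g where "g = (\<lambda>Y Z. \<Sum>(i,j)\<in>S. c (i,j) * wedge (e i) (e j) Y Z)"
  have bf: "bilinear (dform br f)"
    unfolding bilinear_def dform_def linear_iff
    by (auto simp: br_add1 br_add2 br_scale1 br_scale2 linear_add[OF linf] linear_scale[OF linf])
  have bg: "bilinear g"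
    unfolding bilinear_def g_def wedge_def linear_iff
    by (auto simp: linear_add[OF lin] linear_scale[OF lin] sum_distrib_left case_prod_beta
        sum.distrib[symmetric] algebra_simps intro!: sum.cong)
  have lt: "(\<Sum>(i,j)\<in>S. c (i,j) * wedge (e i) (e j) (X a) (X b)) = (if (a,b) \<in> S then c (a,b) else 0)"
    if ab: "a \<in> {1..6}" "b \<in> {1..6}" "a < b" for a b
  proof -
    have "(\<Sum>(i,j)\<in>S. c (i,j) * wedge (e i) (e j) (X a) (X b)) = (\<Sum>p\<in>S. if p = (a,b) then c (a,b) else 0)"
    proof (rule sum.cong[OF refl])
      fix p assume "p \<in> S"
      then obtain i j where p: "p = (i,j)" "1 \<le> i" "i < j" "j \<le> 6" using S(1) by auto
      then show "(case p of (i,j) \<Rightarrow> c (i,j) * wedge (e i) (e j) (X a) (X b)) = (if p = (a,b) then c (a,b) else 0)"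
        using ab unfolding wedge_def by (auto simp: eX)
    qed
    also have "\<dots> = (if (a,b) \<in> S then c (a,b) else 0)" using S(2) by (simp add: sum.delta)
    finally show ?thesis .
  qed
  have base: "dform br f x y = g x y" if xy: "x \<in> X ` {1..6}" "y \<in> X ` {1..6}" for x y
  proof -
    obtain a b where ab: "a \<in> {1..6}" "b \<in> {1..6}" "x = X a" "y = X b" using xy by auto
    consider "a < b" | "a = b" | "b < a" by linarith
    then show ?thesis
    proof cases
      case 1
      have "g (X a) (X b) = (if (a,b) \<in> S then c (a,b) else 0)" unfolding g_def by (rule lt[OF ab(1,2) 1])
      then show ?thesis using van[of a b] ab 1 unfolding dform_def c_def by auto
    next
      case 2
      have "g (X a) (X a) = 0" unfolding g_def wedge_def by (simp add: algebra_simps)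
      then show ?thesis using 2 ab unfolding dform_def by (simp add: alt linear_0[OF linf])
    next
      case 3
      have "g (X a) (X b) = - g (X b) (X a)" unfolding g_def wedge_def
        by (simp add: sum_negf[symmetric] case_prod_beta algebra_simps)
      also have "\<dots> = - (if (b,a) \<in> S then c (b,a) else 0)" unfolding g_def lt[OF ab(2,1) 3] ..
      also have "\<dots> = dform br f (X a) (X b)"
        using van[of b a] ab 3 unfolding dform_def c_def
        by (auto simp: anti[of "X a" "X b"] linear_neg[OF linf])
      finally show ?thesis using ab by simp
    qed
  qed
  have "dform br f Y Z = g Y Z" for Y Z
    by (rule bilinear_eq[OF bf bg, of UNIV "X ` {1..6}" UNIV "X ` {1..6}"]) (use sp base in auto)
  then show ?thesis unfolding in_span2_def g_def by blast
qed

lemma final: "\<exists>e :: nat \<Rightarrow> 'g \<Rightarrow> real. dual_basis6 e \<and>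
     (let \<omega> = (\<lambda>X. complex_of_real (e 1 X) + \<i> * complex_of_real (e 2 X)) in
        is_form_10 J \<omega> \<and> (\<forall>X Y. dform br \<omega> X Y = 0)) \<and>
     in_span2 e {(1,2)} (dform br (e 3)) \<and>
     in_span2 e {(1,2),(1,3),(2,3)} (dform br (e 4)) \<and>
     in_span2 e {(1,2),(1,3),(1,4),(2,3),(2,4),(3,4)} (dform br (e 5)) \<and>
     in_span2 e {(1,2),(1,3),(1,4),(1,5),(2,3),(2,4),(2,5),(3,4)} (dform br (e 6))"
proof -
  obtain X :: "nat \<Rightarrow> 'g" where X:
    "X 2 = J (X 1)"
    "span {X 1, X 2, X 3, X 4, X 5, X 6} = UNIV"
    "\<forall>x y. br x y \<in> span {X 3, X 4, X 5, X 6}"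
    "\<forall>x \<in> span {X 3, X 4, X 5, X 6}. J x \<in> span {X 3, X 4, X 5, X 6}"
    "\<forall>x. br x (X 3) \<in> span {X 4, X 5, X 6}" "\<forall>x. br x (X 4) \<in> span {X 5, X 6}"
    "\<forall>x. br x (X 5) \<in> span {X 6}" "\<forall>x. br x (X 6) = 0"
    "br (X 3) (X 5) = 0" "br (X 4) (X 5) = 0"
    using flag by blast
  have I6: "{1..6::nat} = {1,2,3,4,5,6}" by auto
  define B where "B = X ` {1..6}"
  have B: "B = {X 1, X 2, X 3, X 4, X 5, X 6}" unfolding B_def I6 by simp
  have spB: "span B = UNIV" using X(2) B by simp
  have finB: "finite B" unfolding B_def by simp
  have "dim (UNIV :: 'g set) \<le> card B" using dim_le_card[of UNIV B] spB finB by simp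
  moreover have "card B \<le> 6" unfolding B_def using card_image_le[of "{1..6::nat}" X] by simp
  ultimately have cB: "card B = 6" using dim6 by simp
  have indB: "independent B" using card_eq_dim[of B UNIV] cB dim6 finB spB by simp
  have "card (X ` {1..6}) = card {1..6::nat}" using cB unfolding B_def by simp
  then have injX: "inj_on X {1..6}" by (rule eq_card_imp_inj_on[OF finite_atLeastAtMost])
  have "\<exists>f::'g \<Rightarrow> real. linear f \<and> (\<forall>j\<in>{1..6}. f (X j) = (if j = k then 1 else 0))" for k :: nat
  proof -
    obtain f where f: "linear f" "\<forall>x\<in>B. f x = (if x = X k \<and> k \<in> {1..6} then 1 else (0::real))"
      using linear_independent_extend[OF indB, of "\<lambda>x. if x = X k \<and> k \<in> {1..6} then 1 else (0::real)"] by blast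
    have "f (X j) = (if j = k then 1 else 0)" if j: "j \<in> {1..6}" for j
    proof -
      have XjB: "X j \<in> B" unfolding B_def using j by blast
      have eq: "(X j = X k \<and> k \<in> {1..6}) = (j = k)"
        using injX j unfolding inj_on_def by blast
      show ?thesis using f(2) XjB eq by simp
    qed
    then have "\<forall>j\<in>{1..6}. f (X j) = (if j = k then 1 else 0)" by blast
    with f(1) show ?thesis by (intro exI[of _ f]) simp
  qed
  then have "\<forall>k. \<exists>f::'g \<Rightarrow> real. linear f \<and> (\<forall>j\<in>{1..6}. f (X j) = (if j = k then 1 else 0))" by blast
  from choice[OF this] obtain e :: "nat \<Rightarrow> 'g \<Rightarrow> real"
    where e0: "\<forall>k. linear (e k) \<and> (\<forall>j\<in>{1..6}. e k (X j) = (if j = k then 1 else 0))" by blast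
  have e: "\<And>k. linear (e k)" "\<And>k j. j \<in> {1..6} \<Longrightarrow> e k (X j) = (if j = k then 1 else 0)"
    using e0 by auto
  have eX: "\<And>k j. k \<in> {1..6} \<Longrightarrow> j \<in> {1..6} \<Longrightarrow> e k (X j) = (if j = k then 1 else 0)" using e(2) by blast
  have eXs: "e k (X j) = (if j = k then 1 else 0)" if "j \<in> {1,2,3,4,5,6}" for k j
    using e(2)[of j k] that I6 by auto
  have e0s: "\<forall>x\<in>{X 3, X 4, X 5, X 6}. e 1 x = 0 \<and> e 2 x = 0" using eXs by simp
  have e1U: "e 1 v = 0" "e 2 v = 0" if "v \<in> span {X 3, X 4, X 5, X 6}" for v
    using lin_vanish[OF e(1) _ that] e0s by blast+
  have db: "dual_basis6 e"
    unfolding dual_basis6_def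
  proof (intro conjI ballI allI impI)
    fix i :: nat assume "i \<in> {1..6}" then show "linear (e i)" using e(1) by simp
  next
    fix c :: "nat \<Rightarrow> real" and i :: nat
    assume h: "\<forall>X. (\<Sum>i = 1..6. c i * e i X) = 0" and i: "i \<in> {1..6}"
    have "0 = (\<Sum>j = 1..6. c j * e j (X i))" using h by simp
    also have "\<dots> = (\<Sum>j = 1..6. if j = i then c j else 0)" using e(2)[OF i] by (intro sum.cong) auto
    also have "\<dots> = c i" using i by (simp add: sum.delta')
    finally show "c i = 0" by simp
  qed
  have JX1: "J (X 1) = X 2" using X(1) by simp
  have JX2: "J (X 2) = - X 1" using X(1) by simp
  have e12: "e 1 (X 2) = 0" "e 2 (X 1) = 0" "e 1 (X 1) = 1" "e 2 (X 2) = 1" using eXs by simp_all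
  have eJ1: "e 1 (J Y) = - e 2 Y" for Y
  proof (rule linear_eq_on_span[where B = B])
    show "linear (\<lambda>Y. e 1 (J Y))" using linear_compose[OF linJ e(1)] by (simp add: o_def)
    show "linear (\<lambda>Y. - e 2 Y)" using e(1) by (simp add: linear_compose_neg)
    show "Y \<in> span B" using spB by simp
    fix x assume "x \<in> B"
    then consider "x = X 1" | "x = X 2" | "x \<in> {X 3, X 4, X 5, X 6}" unfolding B by auto
    then show "e 1 (J x) = - e 2 x"
    proof cases
      case 1 then show ?thesis by (simp only: JX1 e12; simp)
    next
      case 2 then show ?thesis by (simp only: JX2 e12 linear_neg[OF e(1)]; simp)
    next
      case 3
      then have "x \<in> span {X 3, X 4, X 5, X 6}" by (rule span_base)
      then have "J x \<in> span {X 3, X 4, X 5, X 6}" using X(4) by blast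
      then have "e 1 (J x) = 0" by (rule e1U(1))
      moreover have "e 2 x = 0" using 3 e0s by blast
      ultimately show ?thesis by simp
    qed
  qed
  have eJ2: "e 2 (J Y) = e 1 Y" for Y
  proof (rule linear_eq_on_span[where B = B])
    show "linear (\<lambda>Y. e 2 (J Y))" using linear_compose[OF linJ e(1)] by (simp add: o_def)
    show "linear (\<lambda>Y. e 1 Y)" using e(1) by simp
    show "Y \<in> span B" using spB by simp
    fix x assume "x \<in> B"
    then consider "x = X 1" | "x = X 2" | "x \<in> {X 3, X 4, X 5, X 6}" unfolding B by auto
    then show "e 2 (J x) = e 1 x"
    proof cases
      case 1 then show ?thesis by (simp only: JX1 e12; simp)
    next
      case 2 then show ?thesis by (simp only: JX2 e12 linear_neg[OF e(1)]; simp)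
    next
      case 3
      then have "x \<in> span {X 3, X 4, X 5, X 6}" by (rule span_base)
      then have "J x \<in> span {X 3, X 4, X 5, X 6}" using X(4) by blast
      then have "e 2 (J x) = 0" by (rule e1U(2))
      moreover have "e 1 x = 0" using 3 e0s by blast
      ultimately show ?thesis by simp
    qed
  qed
  have f10: "is_form_10 J (\<lambda>X. complex_of_real (e 1 X) + \<i> * complex_of_real (e 2 X))"
    unfolding is_form_10_def using eJ1 eJ2 by (simp add: algebra_simps)
  have closed: "dform br (\<lambda>X. complex_of_real (e 1 X) + \<i> * complex_of_real (e 2 X)) Y Z = 0" for Y Z
    unfolding dform_def using e1U X(3) by simp
  have van: "e k (br x (X b)) = 0" if "3 \<le> b" "b \<le> 6" "1 \<le> k" "k \<le> b" for x k b
  proof -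
    have "b = 3 \<or> b = 4 \<or> b = 5 \<or> b = 6" using that by auto
    then show ?thesis
    proof (elim disjE)
      assume b: "b = 3"
      show ?thesis using lin_vanish[OF e(1) _ X(5)[rule_format, of x]] b that eXs by auto
    next
      assume b: "b = 4"
      show ?thesis using lin_vanish[OF e(1) _ X(6)[rule_format, of x]] b that eXs by auto
    next
      assume b: "b = 5"
      show ?thesis using lin_vanish[OF e(1) _ X(7)[rule_format, of x]] b that eXs by auto
    next
      assume b: "b = 6"
      show ?thesis using X(8) b linear_0[OF e(1)] by simp
    qed
  qed
  have sp6: "span (X ` {1..6}) = UNIV" using spB B_def by simp
  have c3: "in_span2 e {(1,2)} (dform br (e 3))"
  proof (rule in_span2_crit[OF e(1) e(1) eX sp6])
    fix a b :: nat assume "1 \<le> a" "a < b" "b \<le> 6" "(a,b) \<notin> {(1,2)}"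
    then have "3 \<le> b" by simp presburger
    with \<open>b \<le> 6\<close> show "e 3 (br (X a) (X b)) = 0" using van by simp
  qed simp_all
  have c4: "in_span2 e {(1,2),(1,3),(2,3)} (dform br (e 4))"
  proof (rule in_span2_crit[OF e(1) e(1) eX sp6])
    fix a b :: nat assume "1 \<le> a" "a < b" "b \<le> 6" "(a,b) \<notin> {(1,2),(1,3),(2,3)}"
    then have "4 \<le> b" by simp presburger
    with \<open>b \<le> 6\<close> show "e 4 (br (X a) (X b)) = 0" using van by simp
  qed simp_all
  have c5: "in_span2 e {(1,2),(1,3),(1,4),(2,3),(2,4),(3,4)} (dform br (e 5))"
  proof (rule in_span2_crit[OF e(1) e(1) eX sp6])
    fix a b :: nat assume "1 \<le> a" "a < b" "b \<le> 6" "(a,b) \<notin> {(1,2),(1,3),(1,4),(2,3),(2,4),(3,4)}"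
    then have "5 \<le> b" by simp presburger
    with \<open>b \<le> 6\<close> show "e 5 (br (X a) (X b)) = 0" using van by simp
  qed simp_all
  have c6: "in_span2 e {(1,2),(1,3),(1,4),(1,5),(2,3),(2,4),(2,5),(3,4)} (dform br (e 6))"
  proof (rule in_span2_crit[OF e(1) e(1) eX sp6])
    fix a b :: nat assume h: "1 \<le> a" "a < b" "b \<le> 6" "(a,b) \<notin> {(1,2),(1,3),(1,4),(1,5),(2,3),(2,4),(2,5),(3,4)}"
    then have "b = 6 \<or> (a = 3 \<and> b = 5) \<or> (a = 4 \<and> b = 5)" by simp presburger
    then show "e 6 (br (X a) (X b)) = 0"
    proof (elim disjE)
      assume "b = 6" then show ?thesis using van[of 6 6 "X a"] by simp
    next
      assume "a = 3 \<and> b = 5" then show ?thesis using X(9) linear_0[OF e(1)] by simp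
    next
      assume "a = 4 \<and> b = 5" then show ?thesis using X(10) linear_0[OF e(1)] by simp
    qed
  qed simp_all
  show ?thesis using db f10 closed c3 c4 c5 c6 unfolding Let_def by blast
qed

end

theorem corollary2p4:
  fixes br :: "'g::euclidean_space \<Rightarrow> 'g \<Rightarrow> 'g" and J :: "'g \<Rightarrow> 'g"
  assumes "DIM('g) = 6"
    and "lie_algebra br"
    and "nilpotent_lie br"
    and "complex_structure br J"
  shows "\<exists>e :: nat \<Rightarrow> 'g \<Rightarrow> real. dual_basis6 e \<and>
     (let \<omega> = (\<lambda>X. complex_of_real (e 1 X) + \<i> * complex_of_real (e 2 X)) in
        is_form_10 J \<omega> \<and> (\<forall>X Y. dform br \<omega> X Y = 0)) \<and>
     in_span2 e {(1,2)} (dform br (e 3)) \<and>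
     in_span2 e {(1,2),(1,3),(2,3)} (dform br (e 4)) \<and>
     in_span2 e {(1,2),(1,3),(1,4),(2,3),(2,4),(3,4)} (dform br (e 5)) \<and>
     in_span2 e {(1,2),(1,3),(1,4),(1,5),(2,3),(2,4),(2,5),(3,4)} (dform br (e 6))"
proof -
  interpret lcx br J using assms by unfold_locales auto
  show ?thesis by (rule final)
qed

end
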